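(* For non-negative integers $m$ and $n$, \[ \overline{{m+n \brack n}}_{q,t} = \sum_{k=0}^{\min\{m,n\}} t^k q^{\frac{k(k+1)}{2}} \frac{(q;q)_{m+n-k}}{(q;q)_k(q;q)_{m-k}(q;q)_{n-k}}. \]
   Context: An overpartition is a partition in which the last occurrence of each distinct part size may be overlined; its weight $|\lambda|$ is the sum of its parts. $\overline{{m+n \brack n}}_{q,t}=\sum_{\lambda} t^{\#_o(\lambda)} q^{|\lambda|}$, the sum over all overpartitions $\lambda$ with largest part at most $m$ and at most $n$ parts, $\#_o(\lambda)$ being the number of overlined parts. $(q;q)_k=\prod_{j=1}^k(1-q^j)$. *)

theory Defs
  imports Main "HOL-Library.Multiset"
begin

text \<open>An overpartition is encoded as a pair (M, S): M is the multiset of parts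
(positive integers) and S is the set of part sizes whose last occurrence is overlined
(so S is a subset of the distinct parts).\<close>

definition overpartitions_bounded :: "nat \<Rightarrow> nat \<Rightarrow> (nat multiset \<times> nat set) set" where
  "overpartitions_bounded m n =
     {(M, S). set_mset M \<subseteq> {1..m} \<and> size M \<le> n \<and> S \<subseteq> set_mset M}"

definition overgauss :: "nat \<Rightarrow> nat \<Rightarrow> 'a::comm_ring_1 \<Rightarrow> 'a \<Rightarrow> 'a" where
  "overgauss m n q t =
     (\<Sum>(M, S) \<in> overpartitions_bounded m n. t ^ card S * q ^ sum_mset M)"

definition qpoch :: "'a::comm_ring_1 \<Rightarrow> nat \<Rightarrow> 'a" where
  "qpoch q k = (\<Prod>j=1..k. 1 - q ^ j)"

end

theory Submission
  imports Defs
begin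

definition Pset :: "nat \<Rightarrow> nat \<Rightarrow> nat multiset set" where
  "Pset m r = {M. set_mset M \<subseteq> {1..m} \<and> size M \<le> r}"

definition Pq :: "nat \<Rightarrow> nat \<Rightarrow> 'a::comm_ring_1 \<Rightarrow> 'a" where
  "Pq m r q = (\<Sum>M\<in>Pset m r. q ^ sum_mset M)"

definition Eset :: "nat \<Rightarrow> nat \<Rightarrow> nat set set" where
  "Eset m k = {S. S \<subseteq> {1..m} \<and> card S = k}"

definition Eq :: "nat \<Rightarrow> nat \<Rightarrow> 'a::comm_ring_1 \<Rightarrow> 'a" where
  "Eq m k q = (\<Sum>S\<in>Eset m k. q ^ \<Sum>S)"

lemma Pset_0: "Pset m 0 = {{#}}"
  by (auto simp: Pset_def)

lemma Pset_Suc: "Pset m (Suc r) = Pset m r \<union> (\<lambda>(x,M). add_mset x M) ` ({1..m} \<times> Pset m r)"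
proof
  show "Pset m (Suc r) \<subseteq> Pset m r \<union> (\<lambda>(x,M). add_mset x M) ` ({1..m} \<times> Pset m r)"
  proof
    fix M assume M: "M \<in> Pset m (Suc r)"
    show "M \<in> Pset m r \<union> (\<lambda>(x,M). add_mset x M) ` ({1..m} \<times> Pset m r)"
    proof (cases "size M \<le> r")
      case True then show ?thesis using M by (auto simp: Pset_def)
    next
      case False
      then have "M \<noteq> {#}" by auto
      then obtain x where x: "x \<in># M" by (meson multiset_nonemptyE)
      have e: "M = add_mset x (M - {#x#})" using x by simp
      have "M - {#x#} \<in> Pset m r" using M False x
        by (auto simp: Pset_def size_Diff_submset dest: in_diffD)
      moreover have "x \<in> {1..m}" using M x by (auto simp: Pset_def)
      ultimately show ?thesis using e by (auto intro!: image_eqI[of _ _ "(x, M - {#x#})"])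
    qed
  qed
  show "Pset m r \<union> (\<lambda>(x,M). add_mset x M) ` ({1..m} \<times> Pset m r) \<subseteq> Pset m (Suc r)"
    by (auto simp: Pset_def)
qed

lemma finite_Pset: "finite (Pset m r)"
  by (induction r) (auto simp: Pset_0 Pset_Suc)

lemma Pq_m0: "Pq m 0 q = 1"
  by (simp add: Pq_def Pset_0)

lemma Pq_0r: "Pq 0 r q = 1"
proof -
  have "Pset 0 r = {{#}}" by (auto simp: Pset_def)
  then show ?thesis by (simp add: Pq_def)
qed

lemma Pq_rec: "Pq (Suc m) (Suc r) q = Pq m (Suc r) q + q ^ Suc m * Pq (Suc m) r q"
proof -
  have split: "Pset (Suc m) (Suc r) = Pset m (Suc r) \<union> add_mset (Suc m) ` Pset (Suc m) r"
  proof
    show "Pset (Suc m) (Suc r) \<subseteq> Pset m (Suc r) \<union> add_mset (Suc m) ` Pset (Suc m) r"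
    proof
      fix M assume M: "M \<in> Pset (Suc m) (Suc r)"
      show "M \<in> Pset m (Suc r) \<union> add_mset (Suc m) ` Pset (Suc m) r"
      proof (cases "Suc m \<in># M")
        case True
        have e: "M = add_mset (Suc m) (M - {#Suc m#})" using True by simp
        have "M - {#Suc m#} \<in> Pset (Suc m) r" using M True
          by (auto simp: Pset_def size_Diff_submset dest: in_diffD)
        then show ?thesis using e by blast
      next
        case False
        then have "set_mset M \<subseteq> {1..m}" using M by (auto simp: Pset_def le_Suc_eq)
        then show ?thesis using M by (auto simp: Pset_def)
      qed
    qed
    show "Pset m (Suc r) \<union> add_mset (Suc m) ` Pset (Suc m) r \<subseteq> Pset (Suc m) (Suc r)"
      by (auto simp: Pset_def)
  qed
  have disj: "Pset m (Suc r) \<inter> add_mset (Suc m) ` Pset (Suc m) r = {}"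
    by (auto simp: Pset_def)
  have "Pq (Suc m) (Suc r) q = Pq m (Suc r) q + (\<Sum>M\<in>add_mset (Suc m) ` Pset (Suc m) r. q ^ sum_mset M)"
    unfolding Pq_def split
    by (rule sum.union_disjoint) (auto simp: finite_Pset disj)
  also have "(\<Sum>M\<in>add_mset (Suc m) ` Pset (Suc m) r. q ^ sum_mset M) = q ^ Suc m * Pq (Suc m) r q"
    by (subst sum.reindex) (auto simp: Pq_def sum_distrib_left power_add inj_on_def mult.assoc)
  finally show ?thesis .
qed

lemma qpoch_Suc: "qpoch q (Suc k) = qpoch q k * (1 - q ^ Suc k)"
  by (simp add: qpoch_def)

lemma qpoch_0: "qpoch q 0 = 1"
  by (simp add: qpoch_def)

lemma Pq_formula: "Pq m r q * qpoch q m * qpoch q r = qpoch q (m + r)"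
proof (induction m arbitrary: r)
  case 0 then show ?case by (simp add: Pq_0r qpoch_0)
next
  case (Suc m)
  note outer = Suc.IH
  show ?case
  proof (induction r)
    case 0 then show ?case by (simp add: Pq_m0 qpoch_0)
  next
    case (Suc r)
    have A: "Pq m (Suc r) q * qpoch q m * qpoch q (Suc r) = qpoch q (m + Suc r)" by (rule outer)
    have B: "Pq (Suc m) r q * qpoch q (Suc m) * qpoch q r = qpoch q (Suc m + r)" by (rule Suc.IH)
    have "Pq (Suc m) (Suc r) q * qpoch q (Suc m) * qpoch q (Suc r)
      = (Pq m (Suc r) q * qpoch q m * qpoch q (Suc r)) * (1 - q ^ Suc m)
        + q ^ Suc m * (Pq (Suc m) r q * qpoch q (Suc m) * qpoch q r) * (1 - q ^ Suc r)"
      by (simp add: Pq_rec qpoch_Suc algebra_simps)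
    also have "\<dots> = qpoch q (m + r + 1) * ((1 - q ^ Suc m) + q ^ Suc m * (1 - q ^ Suc r))"
      unfolding A B by (simp add: algebra_simps)
    also have "\<dots> = qpoch q (Suc m + Suc r)"
      by (simp add: qpoch_Suc algebra_simps power_add)
    finally show ?case .
  qed
qed

lemma finite_Eset: "finite (Eset m k)"
  by (rule finite_subset[of _ "Pow {1..m}"]) (auto simp: Eset_def)

lemma Eset_big: "m < k \<Longrightarrow> Eset m k = {}"
proof -
  assume "m < k"
  { fix S assume "S \<subseteq> {1..m}"
    then have "card S \<le> m" using card_mono[of "{1..m}" S] by simp }
  then show ?thesis using \<open>m < k\<close> unfolding Eset_def by (auto simp: not_le[symmetric])
qed

lemma Eset_0: "Eset m 0 = {{}}"
proof -
  { fix S :: "nat set" assume "S \<subseteq> {1..m}" "card S = 0"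
    moreover have "finite S" using \<open>S \<subseteq> {1..m}\<close> finite_subset by blast
    ultimately have "S = {}" by simp }
  then show ?thesis unfolding Eset_def by auto
qed

lemma Eset_rec: "Eset (Suc m) (Suc k) = Eset m (Suc k) \<union> insert (Suc m) ` Eset m k"
proof
  show "Eset (Suc m) (Suc k) \<subseteq> Eset m (Suc k) \<union> insert (Suc m) ` Eset m k"
  proof
    fix S assume S: "S \<in> Eset (Suc m) (Suc k)"
    have fin: "finite S" using S by (auto simp: Eset_def intro: finite_subset)
    show "S \<in> Eset m (Suc k) \<union> insert (Suc m) ` Eset m k"
    proof (cases "Suc m \<in> S")
      case True
      have "S - {Suc m} \<in> Eset m k" using S True fin by (auto simp: Eset_def le_Suc_eq)
      moreover have "S = insert (Suc m) (S - {Suc m})" using True by auto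
      ultimately show ?thesis by blast
    next
      case False
      then show ?thesis using S by (auto simp: Eset_def le_Suc_eq)
    qed
  qed
  show "Eset m (Suc k) \<union> insert (Suc m) ` Eset m k \<subseteq> Eset (Suc m) (Suc k)"
  proof (rule Un_least)
    show "Eset m (Suc k) \<subseteq> Eset (Suc m) (Suc k)" by (auto simp: Eset_def)
    show "insert (Suc m) ` Eset m k \<subseteq> Eset (Suc m) (Suc k)"
    proof (rule image_subsetI)
      fix S assume S: "S \<in> Eset m k"
      then have a: "S \<subseteq> {1..m}" "card S = k" by (auto simp: Eset_def)
      have fin: "finite S" using a(1) finite_subset by blast
      have "Suc m \<notin> S" using a(1) by auto
      then show "insert (Suc m) S \<in> Eset (Suc m) (Suc k)"
        using a fin by (auto simp: Eset_def)
    qed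
  qed
qed

lemma Eq_rec: "Eq (Suc m) (Suc k) q = Eq m (Suc k) q + q ^ Suc m * Eq m k q"
proof -
  have disj: "Eset m (Suc k) \<inter> insert (Suc m) ` Eset m k = {}"
    by (auto simp: Eset_def)
  have inj: "inj_on (insert (Suc m)) (Eset m k)"
  proof (rule inj_onI)
    fix A B assume A: "A \<in> Eset m k" and B: "B \<in> Eset m k" and e: "insert (Suc m) A = insert (Suc m) B"
    have "Suc m \<notin> A" "Suc m \<notin> B" using A B by (auto simp: Eset_def)
    then show "A = B" using e by (metis insert_ident)
  qed
  have "Eq (Suc m) (Suc k) q = Eq m (Suc k) q + (\<Sum>S\<in>insert (Suc m) ` Eset m k. q ^ \<Sum>S)"
    unfolding Eq_def Eset_rec
    by (rule sum.union_disjoint) (auto simp: finite_Eset disj)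
  also have "(\<Sum>S\<in>insert (Suc m) ` Eset m k. q ^ \<Sum>S) = (\<Sum>S\<in>Eset m k. q ^ Suc m * q ^ \<Sum>S)"
  proof -
    have "(\<Sum>S\<in>insert (Suc m) ` Eset m k. q ^ \<Sum>S) = (\<Sum>S\<in>Eset m k. q ^ \<Sum>(insert (Suc m) S))"
      using sum.reindex[OF inj, of "\<lambda>S. q ^ \<Sum>S"] by (simp add: comp_def)
    also have "\<dots> = (\<Sum>S\<in>Eset m k. q ^ Suc m * q ^ \<Sum>S)"
    proof (rule sum.cong)
      fix S assume "S \<in> Eset m k"
      then have "finite S" "Suc m \<notin> S" by (auto simp: Eset_def intro: finite_subset)
      then show "q ^ \<Sum>(insert (Suc m) S) = q ^ Suc m * q ^ \<Sum>S"
        by (simp add: power_add)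
    qed simp
    finally show ?thesis .
  qed
  finally show ?thesis by (simp add: Eq_def sum_distrib_left)
qed

lemma tri_Suc: "Suc k * (Suc k + 1) div 2 = k * (k + 1) div 2 + Suc k"
proof -
  have "Suc k * (Suc k + 1) = k * (k + 1) + 2 * Suc k" by (simp add: algebra_simps)
  then show ?thesis by simp
qed

lemma gen1: "(E1 + s * E0) * (K * a) * (J * b) = (E1 * (K * a) * J) * b + s * (E0 * K * (J * b)) * (a::'a::comm_ring_1)"
  by (simp add: algebra_simps)

lemma gen2: "(P * x * Q) * (1 - y) + (x * y) * (P * Q) * (1 - x) = (P * x) * (Q * (1 - x * y)) \<and> True"
  for P x Q y :: "'a::comm_ring_1"
  by (simp add: algebra_simps)

lemma gen3: "(E1 + s * E0) * (K * s') * 1 = s * (E0 * K * 1) * s' + E1 * K * s'"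
  for E1 s E0 K s' :: "'a::comm_ring_1"
  by (simp add: algebra_simps)

lemma Eq_formula: "k \<le> m \<Longrightarrow> Eq m k q * qpoch q k * qpoch q (m - k) = q ^ (k * (k + 1) div 2) * qpoch q m"
proof (induction m arbitrary: k)
  case 0 then show ?case by (simp add: Eq_def Eset_0 qpoch_0)
next
  case (Suc m)
  note IH = Suc.IH
  note prems = Suc.prems
  show ?case
  proof (cases k)
    case 0 then show ?thesis by (simp add: Eq_def Eset_0 qpoch_0)
  next
    case (Suc k')
    then have k': "k' \<le> m" using prems by simp
    define T0 where "T0 = k' * (k' + 1) div 2"
    have T1: "Suc k' * (Suc k' + 1) div 2 = T0 + Suc k'" unfolding T0_def by (rule tri_Suc)
    have B: "Eq m k' q * qpoch q k' * qpoch q (m - k') = q ^ T0 * qpoch q m"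
      using IH[OF k'] unfolding T0_def .
    show ?thesis
    proof (cases "k' = m")
      case True
      have z: "Eq m (Suc m) q = 0" by (simp add: Eq_def Eset_big)
      have B0: "Eq m m q * qpoch q m * 1 = q ^ T0 * qpoch q m"
        using B True by (simp add: qpoch_0)
      have "Eq (Suc m) (Suc m) q * qpoch q (Suc m) * qpoch q 0
          = (Eq m (Suc m) q + q ^ Suc m * Eq m m q) * (qpoch q m * (1 - q ^ Suc m)) * 1"
        by (simp only: Eq_rec qpoch_Suc qpoch_0)
      also have "\<dots> = q ^ Suc m * (q ^ T0 * qpoch q m) * (1 - q ^ Suc m)"
        unfolding gen3 B0 z by simp
      also have "\<dots> = q ^ (T0 + Suc m) * qpoch q (Suc m)"
        by (simp only: power_add qpoch_Suc mult_ac)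
      finally show ?thesis using True Suc T1 by simp
    next
      case False
      then have "Suc k' \<le> m" using k' by simp
      then obtain j where j: "m = Suc k' + j" using le_Suc_ex by blast
      have A: "Eq m (Suc k') q * qpoch q (Suc k') * qpoch q j = q ^ (T0 + Suc k') * qpoch q m"
        using IH[of "Suc k'"] j T1 by simp
      have A': "Eq m (Suc k') q * (qpoch q k' * (1 - q ^ Suc k')) * qpoch q j = q ^ T0 * q ^ Suc k' * qpoch q m"
        using A by (simp only: qpoch_Suc power_add)
      have B': "Eq m k' q * qpoch q k' * (qpoch q j * (1 - q ^ Suc j)) = q ^ T0 * qpoch q m"
        using B j by (simp add: qpoch_Suc)
      have sm: "q ^ Suc m = q ^ Suc k' * q ^ Suc j" using j by (simp add: power_add mult_ac)
      have ms: "Suc m - Suc k' = Suc j" using j by simp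
      have "Eq (Suc m) (Suc k') q * qpoch q (Suc k') * qpoch q (Suc m - Suc k')
        = (Eq m (Suc k') q + q ^ Suc m * Eq m k' q) * (qpoch q k' * (1 - q ^ Suc k')) * (qpoch q j * (1 - q ^ Suc j))"
        by (simp only: Eq_rec qpoch_Suc ms)
      also have "\<dots> = (q ^ T0 * q ^ Suc k' * qpoch q m) * (1 - q ^ Suc j)
          + (q ^ Suc k' * q ^ Suc j) * (q ^ T0 * qpoch q m) * (1 - q ^ Suc k')"
        unfolding gen1 A' B' sm ..
      also have "\<dots> = (q ^ T0 * q ^ Suc k') * (qpoch q m * (1 - q ^ Suc k' * q ^ Suc j))"
        using gen2 by blast
      also have "\<dots> = q ^ (Suc k' * (Suc k' + 1) div 2) * qpoch q (Suc m)"
        unfolding T1 power_add qpoch_Suc sm ..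
      finally show ?thesis using Suc by simp
    qed
  qed
qed

lemma mset_set_sub: "finite S \<Longrightarrow> S \<subseteq> set_mset M \<Longrightarrow> mset_set S \<subseteq># M"
  unfolding subseteq_mset_def
  by (metis count_greater_zero_iff count_mset_set(1,3) less_one not_le subsetD zero_le)

lemma sum_mset_mset_set: "sum_mset (mset_set S) = (\<Sum>S::nat)"
  using sum_unfold_sum_mset[of "\<lambda>x. x" S] by simp

lemma decomp:
  "overgauss m n q t = (\<Sum>k=0..min m n. t ^ k * Eq m k q * Pq m (n - k) q)"
proof -
  define A where "A = {S. S \<subseteq> {1..m} \<and> card S \<le> n}"
  define D where "D = Sigma A (\<lambda>S. Pset m (n - card S))"
  define g where "g = (\<lambda>(S::nat set, M'::nat multiset). (mset_set S + M', S))"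
  have finA: "finite A" unfolding A_def by (rule finite_subset[of _ "Pow {1..m}"]) auto
  have finS: "\<And>S. S \<in> A \<Longrightarrow> finite S" unfolding A_def using finite_subset by blast
  have bij: "bij_betw g D (overpartitions_bounded m n)"
  proof (rule bij_betw_byWitness[where f'="\<lambda>(M, S). (S, M - mset_set S)"])
    show "\<forall>a\<in>D. (\<lambda>(M, S). (S, M - mset_set S)) (g a) = a"
      by (auto simp: g_def)
    show "\<forall>a\<in>overpartitions_bounded m n. g ((\<lambda>(M, S). (S, M - mset_set S)) a) = a"
    proof
      fix a assume a: "a \<in> overpartitions_bounded m n"
      obtain M S where ms: "a = (M, S)" by fastforce
      have "S \<subseteq> set_mset M" using a ms by (auto simp: overpartitions_bounded_def)
      then have "mset_set S \<subseteq># M" by (meson finite_set_mset finite_subset mset_set_sub)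
      then show "g ((\<lambda>(M, S). (S, M - mset_set S)) a) = a"
        using ms by (simp add: g_def subset_mset.add_diff_inverse)
    qed
    show "g ` D \<subseteq> overpartitions_bounded m n"
    proof
      fix b assume "b \<in> g ` D"
      then obtain S M' where S: "S \<in> A" and M': "M' \<in> Pset m (n - card S)" and b: "b = g (S, M')"
        unfolding D_def by auto
      have f: "finite S" using finS S .
      show "b \<in> overpartitions_bounded m n"
        using S M' f b by (auto simp: g_def overpartitions_bounded_def A_def Pset_def)
    qed
    show "(\<lambda>(M, S). (S, M - mset_set S)) ` overpartitions_bounded m n \<subseteq> D"
    proof
      fix b assume "b \<in> (\<lambda>(M, S). (S, M - mset_set S)) ` overpartitions_bounded m n"
      then obtain M S where a: "(M, S) \<in> overpartitions_bounded m n" and b: "b = (S, M - mset_set S)"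
        by auto
      have sub: "set_mset M \<subseteq> {1..m}" "size M \<le> n" "S \<subseteq> set_mset M"
        using a by (auto simp: overpartitions_bounded_def)
      have f: "finite S" using sub(3) finite_subset by blast
      have ms: "mset_set S \<subseteq># M" using sub(3) f by (simp add: mset_set_sub)
      have cs: "card S \<le> size M" using size_mset_mono[OF ms] by simp
      have sz: "size (M - mset_set S) = size M - card S" using ms by (simp add: size_Diff_submset)
      have "set_mset (M - mset_set S) \<subseteq> {1..m}" using sub(1) by (meson in_diffD subset_iff)
      then show "b \<in> D" using sub cs sz b by (auto simp: D_def A_def Pset_def)
    qed
  qed
  have "overgauss m n q t = (\<Sum>p\<in>D. (\<lambda>(M, S). t ^ card S * q ^ sum_mset M) (g p))"
    unfolding overgauss_def by (rule sum.reindex_bij_betw[OF bij, symmetric])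
  also have "\<dots> = (\<Sum>p\<in>D. (\<lambda>(S, M'). t ^ card S * q ^ (\<Sum>S) * q ^ sum_mset M') p)"
    by (rule sum.cong) (auto simp: g_def sum_mset_mset_set power_add mult.assoc)
  also have "\<dots> = (\<Sum>S\<in>A. \<Sum>M'\<in>Pset m (n - card S). t ^ card S * q ^ (\<Sum>S) * q ^ sum_mset M')"
    unfolding D_def by (rule sum.Sigma[symmetric]) (auto simp: finA finite_Pset)
  also have "\<dots> = (\<Sum>S\<in>A. t ^ card S * Pq m (n - card S) q * q ^ (\<Sum>S))"
    by (rule sum.cong) (auto simp: Pq_def sum_distrib_left mult.commute mult.left_commute)
  also have "\<dots> = (\<Sum>k\<in>{0..min m n}. \<Sum>S\<in>{S. S \<in> A \<and> card S = k}. t ^ card S * Pq m (n - card S) q * q ^ (\<Sum>S))"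
  proof (rule sum.group[symmetric])
    show "finite A" by (rule finA)
    show "finite {0..min m n}" by simp
    show "card ` A \<subseteq> {0..min m n}"
    proof
      fix c assume "c \<in> card ` A"
      then obtain S where S: "S \<in> A" "c = card S" by auto
      then have "card S \<le> card {1..m}" unfolding A_def by (intro card_mono) auto
      then show "c \<in> {0..min m n}" using S unfolding A_def by auto
    qed
  qed
  also have "\<dots> = (\<Sum>k=0..min m n. t ^ k * Eq m k q * Pq m (n - k) q)"
  proof (rule sum.cong)
    fix k assume k: "k \<in> {0..min m n}"
    have e: "{S. S \<in> A \<and> card S = k} = Eset m k" using k by (auto simp: A_def Eset_def)
    show "(\<Sum>S\<in>{S. S \<in> A \<and> card S = k}. t ^ card S * Pq m (n - card S) q * q ^ (\<Sum>S)) =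
        t ^ k * Eq m k q * Pq m (n - k) q"
      unfolding e by (auto simp: Eq_def sum_distrib_left Eset_def mult.commute mult.left_commute intro!: sum.cong)
  qed simp
  finally show ?thesis .
qed

lemma qpoch_nz:
  fixes q :: "'a::field"
  assumes "\<And>j. 1 \<le> j \<Longrightarrow> j \<le> N \<Longrightarrow> q ^ j \<noteq> 1" "i \<le> N"
  shows "qpoch q i \<noteq> 0"
  unfolding qpoch_def using assms by (auto simp: prod_zero_iff)

theorem theorem2p2:
  fixes q t :: "'a::field" and m n :: nat
  assumes "\<And>j. 1 \<le> j \<Longrightarrow> j \<le> m + n \<Longrightarrow> q ^ j \<noteq> 1"
  shows "overgauss m n q t =
    (\<Sum>k=0..min m n. t ^ k * q ^ (k * (k + 1) div 2) *
       qpoch q (m + n - k) / (qpoch q k * qpoch q (m - k) * qpoch q (n - k)))"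
  unfolding decomp
proof (rule sum.cong)
  fix k assume k: "k \<in> {0..min m n}"
  have nz: "\<And>i. i \<le> m + n \<Longrightarrow> qpoch q i \<noteq> 0" using qpoch_nz[OF assms] by blast
  have E: "Eq m k q * qpoch q k * qpoch q (m - k) = q ^ (k * (k + 1) div 2) * qpoch q m"
    using k by (intro Eq_formula) auto
  have P: "Pq m (n - k) q * qpoch q m * qpoch q (n - k) = qpoch q (m + n - k)"
    using Pq_formula[of m "n - k" q] k by simp
  have n1: "qpoch q k \<noteq> 0" "qpoch q (m - k) \<noteq> 0" "qpoch q (n - k) \<noteq> 0" "qpoch q m \<noteq> 0"
    using k by (auto intro!: nz)
  have E': "Eq m k q = q ^ (k * (k + 1) div 2) * qpoch q m / (qpoch q k * qpoch q (m - k))"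
    using E n1 by (simp add: field_simps)
  have P': "Pq m (n - k) q = qpoch q (m + n - k) / (qpoch q m * qpoch q (n - k))"
    using P n1 by (simp add: field_simps)
  show "t ^ k * Eq m k q * Pq m (n - k) q = t ^ k * q ^ (k * (k + 1) div 2) *
       qpoch q (m + n - k) / (qpoch q k * qpoch q (m - k) * qpoch q (n - k))"
    unfolding E' P' using n1 by (simp add: field_simps)
qed simp

end
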